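(* Let $X$ satisfy (P1) and (P2), let $\alpha$ be a saddle connection on $X$ which is neither a side nor a diagonal, and consider a maximal run of consecutive adjacent segments in the polygonal decomposition of $\alpha$. If two segments of this run lie in the same polygon and have the same sign, then the run contains an even number of segments.
   Context: $X$ is a translation surface obtained from finitely many Euclidean polygons by gluing pairs of parallel sides of equal length by translations, with (P1): each polygon convex with all angles obtuse or right; (P2): no two sides of the same polygon are identified. Saddle connection: straight segment between singularities (images of vertices) with none in its interior; a diagonal is a segment inside a polygon joining two non-adjacent vertices. Polygonal decomposition: cut $\alpha$ each time it passes from one polygon to another, giving consecutive (oriented) segments $\alpha_1,\dots,\alpha_k$, each in one polygon. A segment in polygon $P$ is adjacent if it goes from the relative interior of a side $e$ of $P$ to the relative interior of a side adjacent to $e$; otherwise non-adjacent. Labeling the sides of each polygon $P$ in cyclic clockwise order $e_1,\dots,e_N$, an adjacent segment in $P$ has positive sign if it goes from some $e_u$ to $e_{u+1}$ and negative sign if it goes from $e_u$ to $e_{u-1}$. *)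

theory Defs
  imports "HOL-Analysis.Analysis"
begin

text \<open>Polygons are lists of vertices in the plane (complex numbers) in clockwise
cyclic order; side u of polygon vs goes from vertex u to vertex u+1 (mod N).\<close>

definition cross :: "complex \<Rightarrow> complex \<Rightarrow> real" where
  "cross a b = Im (cnj a * b)"

definition dotc :: "complex \<Rightarrow> complex \<Rightarrow> real" where
  "dotc a b = Re (cnj a * b)"

definition vtx :: "complex list \<Rightarrow> nat \<Rightarrow> complex" where
  "vtx vs u = vs ! (u mod length vs)"

definition edge :: "complex list \<Rightarrow> nat \<Rightarrow> complex" where
  "edge vs u = vtx vs (Suc u) - vtx vs u"

text \<open>Strictly convex polygon, vertices in clockwise order (interior on the right
of every directed side).\<close>
definition convex_cw_polygon :: "complex list \<Rightarrow> bool" where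
  "convex_cw_polygon vs \<longleftrightarrow> length vs \<ge> 3 \<and>
     (\<forall>u < length vs. \<forall>w < length vs. w \<noteq> u \<and> w \<noteq> Suc u mod length vs \<longrightarrow>
        cross (edge vs u) (vs ! w - vtx vs u) < 0)"

text \<open>All interior angles are obtuse or right (at least pi/2).\<close>
definition angles_obtuse_or_right :: "complex list \<Rightarrow> bool" where
  "angles_obtuse_or_right vs \<longleftrightarrow>
     (\<forall>u < length vs. dotc (vtx vs (u + length vs - 1) - vs ! u) (vtx vs (Suc u) - vs ! u) \<le> 0)"

definition poly_interior :: "complex list \<Rightarrow> complex set" where
  "poly_interior vs = {z. \<forall>u < length vs. cross (edge vs u) (z - vtx vs u) < 0}"

definition open_side :: "complex list \<Rightarrow> nat \<Rightarrow> complex set" where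
  "open_side vs u = open_segment (vtx vs u) (vtx vs (Suc u))"

definition is_side_idx :: "complex list list \<Rightarrow> nat \<times> nat \<Rightarrow> bool" where
  "is_side_idx polys s \<longleftrightarrow> fst s < length polys \<and> snd s < length (polys ! fst s)"

text \<open>Translation surface from polygons satisfying (P1) and (P2): every side is glued
to exactly one other side (glue is a fixed-point free involution on sides), glued sides
are parallel of equal length with opposite boundary orientation (gluing by translation),
and (P2) glued sides belong to different polygons.\<close>
definition translation_surface_P1P2 :: "complex list list \<Rightarrow> (nat \<times> nat \<Rightarrow> nat \<times> nat) \<Rightarrow> bool" where
  "translation_surface_P1P2 polys glue \<longleftrightarrow>
     polys \<noteq> [] \<and>
     (\<forall>P \<in> set polys. convex_cw_polygon P \<and> angles_obtuse_or_right P) \<and>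
     (\<forall>s. is_side_idx polys s \<longrightarrow>
        is_side_idx polys (glue s) \<and> glue (glue s) = s \<and> glue s \<noteq> s \<and>
        fst (glue s) \<noteq> fst s \<and>
        edge (polys ! fst (glue s)) (snd (glue s)) = - edge (polys ! fst s) (snd s))"

text \<open>The translation carrying side s onto its partner glue s
(vertex u goes to vertex j+1, vertex u+1 goes to vertex j).\<close>
definition glue_map :: "complex list list \<Rightarrow> (nat \<times> nat \<Rightarrow> nat \<times> nat) \<Rightarrow> nat \<times> nat \<Rightarrow> complex \<Rightarrow> complex" where
  "glue_map polys glue s z =
     z - vtx (polys ! fst s) (snd s) + vtx (polys ! fst (glue s)) (Suc (snd (glue s)))"

definition is_vertex :: "complex list \<Rightarrow> complex \<Rightarrow> bool" where
  "is_vertex vs z \<longleftrightarrow> z \<in> set vs"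

text \<open>A segment is a triple (polygon index, start point, end point).
A saddle connection which is not a side is given by its polygonal decomposition
alpha_1,...,alpha_k: straight segments in polygons, all of the same direction,
whose open interiors lie in the polygon interiors, starting and ending at vertices,
where each intermediate endpoint lies in the relative interior of a side and the
next segment starts at the glued point of the partner side.\<close>
definition transversal_saddle_connection ::
  "complex list list \<Rightarrow> (nat \<times> nat \<Rightarrow> nat \<times> nat) \<Rightarrow> (nat \<times> complex \<times> complex) list \<Rightarrow> bool" where
  "transversal_saddle_connection polys glue segs \<longleftrightarrow>
     segs \<noteq> [] \<and>
     (\<forall>i < length segs. fst (segs ! i) < length polys \<and>
        fst (snd (segs ! i)) \<noteq> snd (snd (segs ! i)) \<and>
        open_segment (fst (snd (segs ! i))) (snd (snd (segs ! i)))
          \<subseteq> poly_interior (polys ! fst (segs ! i))) \<and>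
     is_vertex (polys ! fst (hd segs)) (fst (snd (hd segs))) \<and>
     is_vertex (polys ! fst (last segs)) (snd (snd (last segs))) \<and>
     (\<forall>i. Suc i < length segs \<longrightarrow>
        (let (p, a, b) = segs ! i; (q, a', b') = segs ! Suc i in
          (\<exists>c > 0. b' - a' = of_real c * (b - a)) \<and>
          (\<exists>u < length (polys ! p). b \<in> open_side (polys ! p) u \<and>
              fst (glue (p, u)) = q \<and> a' = glue_map polys glue (p, u) b)))"

definition is_side :: "complex list list \<Rightarrow> (nat \<times> complex \<times> complex) list \<Rightarrow> bool" where
  "is_side polys segs \<longleftrightarrow> length segs = 1 \<and>
     (let (p, a, b) = hd segs in p < length polys \<and>
        (\<exists>u < length (polys ! p).
           (a = vtx (polys ! p) u \<and> b = vtx (polys ! p) (Suc u)) \<or>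
           (b = vtx (polys ! p) u \<and> a = vtx (polys ! p) (Suc u))))"

definition saddle_connection ::
  "complex list list \<Rightarrow> (nat \<times> nat \<Rightarrow> nat \<times> nat) \<Rightarrow> (nat \<times> complex \<times> complex) list \<Rightarrow> bool" where
  "saddle_connection polys glue segs \<longleftrightarrow>
     transversal_saddle_connection polys glue segs \<or> is_side polys segs"

definition is_diagonal :: "complex list list \<Rightarrow> (nat \<times> complex \<times> complex) list \<Rightarrow> bool" where
  "is_diagonal polys segs \<longleftrightarrow> length segs = 1 \<and>
     (let (p, a, b) = hd segs in p < length polys \<and>
        (\<exists>u < length (polys ! p). \<exists>w < length (polys ! p).
           a = polys ! p ! u \<and> b = polys ! p ! w \<and> w \<noteq> u \<and>
           w \<noteq> Suc u mod length (polys ! p) \<and> u \<noteq> Suc w mod length (polys ! p)))"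

definition adj_pos :: "complex list list \<Rightarrow> (nat \<times> complex \<times> complex) list \<Rightarrow> nat \<Rightarrow> bool" where
  "adj_pos polys segs i \<longleftrightarrow> i < length segs \<and>
     (let (p, a, b) = segs ! i; N = length (polys ! p) in
       \<exists>u < N. a \<in> open_side (polys ! p) u \<and> b \<in> open_side (polys ! p) (Suc u mod N))"

definition adj_neg :: "complex list list \<Rightarrow> (nat \<times> complex \<times> complex) list \<Rightarrow> nat \<Rightarrow> bool" where
  "adj_neg polys segs i \<longleftrightarrow> i < length segs \<and>
     (let (p, a, b) = segs ! i; N = length (polys ! p) in
       \<exists>u < N. a \<in> open_side (polys ! p) u \<and> b \<in> open_side (polys ! p) ((u + N - 1) mod N))"

definition adjacent_seg :: "complex list list \<Rightarrow> (nat \<times> complex \<times> complex) list \<Rightarrow> nat \<Rightarrow> bool" where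
  "adjacent_seg polys segs i \<longleftrightarrow> adj_pos polys segs i \<or> adj_neg polys segs i"

text \<open>Indices i..j (0-based, inclusive) form a maximal run of consecutive adjacent segments.\<close>
definition maximal_adjacent_run :: "complex list list \<Rightarrow> (nat \<times> complex \<times> complex) list \<Rightarrow> nat \<Rightarrow> nat \<Rightarrow> bool" where
  "maximal_adjacent_run polys segs i j \<longleftrightarrow>
     i \<le> j \<and> j < length segs \<and>
     (\<forall>m \<in> {i..j}. adjacent_seg polys segs m) \<and>
     (i = 0 \<or> \<not> adjacent_seg polys segs (i - 1)) \<and>
     (Suc j = length segs \<or> \<not> adjacent_seg polys segs (Suc j))"

end

theory Submission
  imports Defs
begin


lemma cross_eq: "cross a b = Re a * Im b - Im a * Re b"
  by (simp add: cross_def)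
lemma dotc_eq: "dotc a b = Re a * Re b + Im a * Im b"
  by (simp add: dotc_def)

lemma cross_diff2: "cross a (b - c) = cross a b - cross a c" by (simp add: cross_eq algebra_simps)
lemma cross_add2: "cross a (b + c) = cross a b + cross a c" by (simp add: cross_eq algebra_simps)
lemma cross_diff1: "cross (b - c) a = cross b a - cross c a" by (simp add: cross_eq algebra_simps)
lemma cross_add1: "cross (b + c) a = cross b a + cross c a" by (simp add: cross_eq algebra_simps)
lemma cross_scale2: "cross a (of_real s * b) = s * cross a b" by (simp add: cross_eq algebra_simps)
lemma cross_scale1: "cross (of_real s * a) b = s * cross a b" by (simp add: cross_eq algebra_simps)
lemma cross_minus2: "cross a (- b) = - cross a b" by (simp add: cross_eq algebra_simps)
lemma cross_minus1: "cross (- a) b = - cross a b" by (simp add: cross_eq algebra_simps)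
lemma cross_self: "cross a a = 0" by (simp add: cross_eq algebra_simps)
lemma cross_anti: "cross a b = - cross b a" by (simp add: cross_eq algebra_simps)

lemma real_dir:
  assumes "D \<noteq> 0" "cross D Z = 0" shows "\<exists>mu. Z = of_real mu * D"
proof -
  have "Im (Z / D) = 0"
    using assms by (simp add: cross_eq Im_divide field_simps)
  hence "Z / D = of_real (Re (Z/D))" by (simp add: complex_eq_iff)
  hence "Z = of_real (Re (Z/D)) * D" using assms(1) by (simp add: field_simps)
  thus ?thesis by blast
qed

lemma mod_lt2: "m < 2*n \<Longrightarrow> m mod (n::nat) = (if m < n then m else m - n)"
  by (simp add: mod_if le_mod_geq)




lemma vtx_mod: "vtx vs (k mod length vs) = vtx vs k" by (simp add: vtx_def)
lemma vtx_Suc_mod: "vtx vs (Suc (k mod length vs)) = vtx vs (Suc k)"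
  by (simp add: vtx_def mod_Suc_eq)
lemma edge_mod: "edge vs (k mod length vs) = edge vs k"
  by (simp add: edge_def vtx_mod vtx_Suc_mod)
lemma nth_vtx: "w < length vs \<Longrightarrow> vs ! w = vtx vs w" by (simp add: vtx_def)

lemma convex_len: "convex_cw_polygon vs \<Longrightarrow> length vs \<ge> 3"
  by (simp add: convex_cw_polygon_def)

lemma C1:
  assumes "convex_cw_polygon vs" "u < length vs" "w < length vs" "w \<noteq> u" "w \<noteq> Suc u mod length vs"
  shows "cross (edge vs u) (vtx vs w - vtx vs u) < 0"
  using assms unfolding convex_cw_polygon_def by (metis nth_vtx)

lemma C0:
  assumes "convex_cw_polygon vs" "u < length vs" "w < length vs"
  shows "cross (edge vs u) (vtx vs w - vtx vs u) \<le> 0"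
proof (cases "w = u \<or> w = Suc u mod length vs")
  case True
  then show ?thesis
  proof
    assume "w = u" thus ?thesis by (simp add: cross_eq)
  next
    assume "w = Suc u mod length vs"
    hence "vtx vs w = vtx vs (Suc u)" by (simp add: vtx_mod)
    thus ?thesis by (simp add: edge_def[symmetric] cross_self)
  qed
next
  case False
  then show ?thesis using C1[OF assms] by auto
qed

lemma os_param:
  assumes "z \<in> open_side vs w"
  shows "\<exists>s. 0 < s \<and> s < 1 \<and> z = vtx vs w + of_real s * edge vs w \<and> edge vs w \<noteq> 0"
proof -
  from assms obtain s where "vtx vs w \<noteq> vtx vs (Suc w)" "0 < s" "s < 1"
    "z = (1 - s) *\<^sub>R vtx vs w + s *\<^sub>R vtx vs (Suc w)"
    unfolding open_side_def in_segment(2) by blast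
  then show ?thesis
    by (intro exI[of _ s]) (auto simp: edge_def scaleR_conv_of_real algebra_simps)
qed

lemma os_on_line: "z \<in> open_side vs w \<Longrightarrow> cross (edge vs w) (z - vtx vs w) = 0"
  using os_param[of z vs w] by (auto simp: cross_scale2 cross_self)

lemma comb_neg:
  fixes s c1 c2 :: real
  assumes "0 < s" "s < 1" "c1 \<le> 0" "c2 \<le> 0" "c1 < 0 \<or> c2 < 0"
  shows "(1 - s) * c1 + s * c2 < 0"
proof -
  have "(1 - s) * c1 \<le> 0" "s * c2 \<le> 0" using assms by (auto simp: mult_nonneg_nonpos)
  moreover have "(1 - s) * c1 < 0 \<or> s * c2 < 0" using assms by (auto simp: mult_pos_neg)
  ultimately show ?thesis by linarith
qed

lemma mod3_facts:
  assumes "length vs \<ge> 3" "u < length vs"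
  shows "Suc (Suc u) mod length vs \<noteq> u" "Suc u mod length vs \<noteq> u"
    "Suc (Suc u) mod length vs \<noteq> Suc u mod length vs"
    "Suc u mod length vs \<noteq> (u + length vs - 1) mod length vs"
    "Suc ((u + length vs - 1) mod length vs) mod length vs = u"
    "(u + length vs - 1) mod length vs < length vs"
    "Suc u mod length vs < length vs"
  using assms by (auto simp: mod_lt2)

lemma suc_mod_inj:
  assumes "u < n" "w < n" "Suc u mod n = Suc w mod n" shows "u = w"
  using assms by (auto simp: mod_lt2 split: if_splits)

lemma C2:
  assumes "convex_cw_polygon vs" "u < length vs" "w < length vs" "z \<in> open_side vs w"
  shows "cross (edge vs u) (z - vtx vs u) \<le> 0"
    and "u \<noteq> w \<Longrightarrow> cross (edge vs u) (z - vtx vs u) < 0"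
proof -
  let ?N = "length vs"
  have N3: "?N \<ge> 3" using assms(1) convex_len by auto
  obtain s where s: "0 < s" "s < 1" "z = vtx vs w + of_real s * edge vs w"
    using os_param[OF assms(4)] by blast
  define w' where "w' = Suc w mod ?N"
  have w'N: "w' < ?N" unfolding w'_def using N3 by (intro mod_less_divisor) linarith
  have vw': "vtx vs w' = vtx vs (Suc w)" by (simp add: w'_def vtx_mod)
  have eq: "cross (edge vs u) (z - vtx vs u) =
      (1 - s) * cross (edge vs u) (vtx vs w - vtx vs u) + s * cross (edge vs u) (vtx vs w' - vtx vs u)"
    by (simp add: s(3) vw' edge_def cross_eq algebra_simps)
  have c1: "cross (edge vs u) (vtx vs w - vtx vs u) \<le> 0" using C0 assms by auto
  have c2: "cross (edge vs u) (vtx vs w' - vtx vs u) \<le> 0" using C0 assms w'N by auto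
  show "cross (edge vs u) (z - vtx vs u) \<le> 0"
    unfolding eq using c1 c2 s by (smt (verit) mult_nonneg_nonpos)
  assume "u \<noteq> w"
  have "cross (edge vs u) (vtx vs w - vtx vs u) < 0 \<or> cross (edge vs u) (vtx vs w' - vtx vs u) < 0"
  proof (cases "w = Suc u mod ?N")
    case True
    have "w' \<noteq> u" using mod3_facts(1)[OF N3 assms(2)] True w'_def by (simp add: mod_Suc_eq)
    moreover have "w' \<noteq> Suc u mod ?N"
      using suc_mod_inj[OF assms(3) assms(2)] \<open>u \<noteq> w\<close> w'_def by auto
    ultimately show ?thesis using C1[OF assms(1,2) w'N] by auto
  next
    case False
    then show ?thesis using C1[OF assms(1,2,3)] \<open>u \<noteq> w\<close> by auto
  qed
  then show "cross (edge vs u) (z - vtx vs u) < 0"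
    unfolding eq using comb_neg[OF s(1,2) c1 c2] by blast
qed

lemma C3:
  assumes "convex_cw_polygon vs" "w < length vs" "z \<in> open_side vs w" "z \<in> set vs"
  shows False
proof -
  obtain k where k: "k < length vs" "z = vtx vs k" using assms(4) by (metis in_set_conv_nth nth_vtx)
  obtain s where s: "0 < s" "s < 1" "z = vtx vs w + of_real s * edge vs w" "edge vs w \<noteq> 0"
    using os_param[OF assms(3)] by blast
  show False
  proof (cases "k = w \<or> k = Suc w mod length vs")
    case True
    then show ?thesis
    proof
      assume "k = w"
      hence "of_real s * edge vs w = 0" using k s by simp
      thus False using s by simp
    next
      assume "k = Suc w mod length vs"
      hence "vtx vs k = vtx vs w + edge vs w" by (simp add: vtx_mod edge_def)
      hence "of_real (1 - s) * edge vs w = 0" using k s by (simp add: algebra_simps)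
      thus False using s by simp
    qed
  next
    case False
    hence "cross (edge vs w) (vtx vs k - vtx vs w) < 0" using C1[OF assms(1,2) k(1)] by auto
    moreover have "cross (edge vs w) (z - vtx vs w) = 0" using os_on_line[OF assms(3)] .
    ultimately show False using k by simp
  qed
qed

lemma C4:
  assumes "z \<in> poly_interior vs"
  shows "w < length vs \<Longrightarrow> z \<notin> open_side vs w" and "z \<notin> set vs"
proof -
  show "w < length vs \<Longrightarrow> z \<notin> open_side vs w"
    using assms os_on_line unfolding poly_interior_def by fastforce
  show "z \<notin> set vs"
  proof
    assume "z \<in> set vs"
    then obtain k where "k < length vs" "z = vtx vs k" by (metis in_set_conv_nth nth_vtx)
    thus False using assms unfolding poly_interior_def by (auto simp: cross_eq)
  qed
qed

lemma C5:
  assumes "convex_cw_polygon vs" "u < length vs" "w < length vs"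
    "z \<in> open_side vs u" "z \<in> open_side vs w"
  shows "u = w"
  using C2(2)[OF assms(1,2,3,5)] os_on_line[OF assms(4)] by force




lemma cross_half: "cross a (b / 2) = cross a b / 2" by (simp add: cross_eq)

lemma entry_sign:
  assumes "convex_cw_polygon vs" "a \<noteq> b" "open_segment a b \<subseteq> poly_interior vs"
    "u < length vs" "a \<in> open_side vs u"
  shows "cross (edge vs u) (b - a) < 0"
proof -
  have "midpoint a b \<in> poly_interior vs" using assms(2,3) by auto
  hence "cross (edge vs u) (midpoint a b - vtx vs u) < 0"
    using assms(4) unfolding poly_interior_def by auto
  moreover have "midpoint a b - vtx vs u = (a - vtx vs u) + of_real (1/2) * (b - a)"
    by (simp add: midpoint_def scaleR_conv_of_real complex_eq_iff field_simps)
  ultimately show ?thesis using os_on_line[OF assms(5)] by (simp add: cross_add2 cross_half)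
qed

lemma exit_sign:
  assumes "convex_cw_polygon vs" "a \<noteq> b" "open_segment a b \<subseteq> poly_interior vs"
    "x < length vs" "b \<in> open_side vs x"
  shows "cross (edge vs x) (b - a) > 0"
proof -
  have "midpoint a b \<in> poly_interior vs" using assms(2,3) by auto
  hence "cross (edge vs x) (midpoint a b - vtx vs x) < 0"
    using assms(4) unfolding poly_interior_def by auto
  moreover have "midpoint a b - vtx vs x = (b - vtx vs x) - of_real (1/2) * (b - a)"
    by (simp add: midpoint_def scaleR_conv_of_real complex_eq_iff field_simps)
  ultimately show ?thesis using os_on_line[OF assms(5)] by (simp add: cross_diff2 cross_half)
qed

lemma CF:
  assumes "convex_cw_polygon vs" "angles_obtuse_or_right vs" "u < length vs"
  shows "dotc (edge vs u) (edge vs (Suc u)) \<ge> 0" "cross (edge vs u) (edge vs (Suc u)) < 0"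
proof -
  let ?N = "length vs"
  have N3: "?N \<ge> 3" using assms(1) convex_len by auto
  define x where "x = Suc u mod ?N"
  have xN: "x < ?N" using mod3_facts(7)[OF N3 assms(3)] x_def by simp
  have "dotc (vtx vs (x + ?N - 1) - vs ! x) (vtx vs (Suc x) - vs ! x) \<le> 0"
    using assms(2) xN unfolding angles_obtuse_or_right_def by blast
  moreover have "(x + ?N - 1) mod ?N = u" using assms(3) N3 unfolding x_def by (auto simp: mod_lt2)
  hence "vtx vs (x + ?N - 1) = vtx vs u" by (metis vtx_mod)
  moreover have "vs ! x = vtx vs (Suc u)" using xN by (simp add: nth_vtx x_def vtx_mod)
  moreover have "vtx vs (Suc x) = vtx vs (Suc (Suc u))" unfolding x_def by (metis vtx_Suc_mod)
  ultimately have "dotc (vtx vs u - vtx vs (Suc u)) (vtx vs (Suc (Suc u)) - vtx vs (Suc u)) \<le> 0"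
    by simp
  thus "dotc (edge vs u) (edge vs (Suc u)) \<ge> 0"
    by (simp add: edge_def dotc_eq algebra_simps)
  define w where "w = Suc (Suc u) mod ?N"
  have wN: "w < ?N" unfolding w_def using N3 by (intro mod_less_divisor) linarith
  have "w \<noteq> u" "w \<noteq> Suc u mod ?N" using mod3_facts[OF N3 assms(3)] w_def by auto
  hence "cross (edge vs u) (vtx vs w - vtx vs u) < 0" using C1[OF assms(1,3) wN] by auto
  moreover have "vtx vs w = vtx vs (Suc (Suc u))" unfolding w_def by (metis vtx_mod)
  ultimately show "cross (edge vs u) (edge vs (Suc u)) < 0"
    by (simp add: edge_def cross_eq algebra_simps)
qed

lemma CFc:
  assumes "convex_cw_polygon vs" "u < length vs"
  shows "cross (edge vs u) (edge vs (Suc u)) < 0"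
proof -
  let ?N = "length vs"
  have N3: "?N \<ge> 3" using assms(1) convex_len by auto
  define w where "w = Suc (Suc u) mod ?N"
  have wN: "w < ?N" unfolding w_def using N3 by (intro mod_less_divisor) linarith
  have "w \<noteq> u" "w \<noteq> Suc u mod ?N" using mod3_facts[OF N3 assms(2)] w_def by auto
  hence "cross (edge vs u) (vtx vs w - vtx vs u) < 0" using C1[OF assms(1,2) wN] by auto
  moreover have "vtx vs w = vtx vs (Suc (Suc u))" unfolding w_def by (metis vtx_mod)
  ultimately show "cross (edge vs u) (edge vs (Suc u)) < 0"
    by (simp add: edge_def cross_eq algebra_simps)
qed

lemma glue_os:
  assumes "translation_surface_P1P2 polys glue" "is_side_idx polys s"
    "z \<in> open_side (polys ! fst s) (snd s)"
  shows "glue_map polys glue s z \<in> open_side (polys ! fst (glue s)) (snd (glue s))"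
proof -
  let ?q = "polys ! fst (glue s)" and ?j = "snd (glue s)" and ?p = "polys ! fst s" and ?u = "snd s"
  have E: "edge ?q ?j = - edge ?p ?u" using assms(1,2) unfolding translation_surface_P1P2_def by blast
  obtain t where t: "0 < t" "t < 1" "z = vtx ?p ?u + of_real t * edge ?p ?u" "edge ?p ?u \<noteq> 0"
    using os_param[OF assms(3)] by blast
  have E2: "vtx ?q (Suc ?j) = vtx ?q ?j - edge ?p ?u" using E unfolding edge_def by (simp add: algebra_simps)
  have "glue_map polys glue s z = (1 - t) *\<^sub>R vtx ?q (Suc ?j) + t *\<^sub>R vtx ?q ?j"
    unfolding glue_map_def t(3) E2
    by (simp add: scaleR_conv_of_real algebra_simps)
  moreover have "vtx ?q (Suc ?j) \<noteq> vtx ?q ?j" using E t(4) by (auto simp: edge_def)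
  ultimately have "glue_map polys glue s z \<in> open_segment (vtx ?q (Suc ?j)) (vtx ?q ?j)"
    unfolding in_segment(2) using t by blast
  thus ?thesis unfolding open_side_def by (simp add: open_segment_commute)
qed

lemma LM:
  assumes "convex_cw_polygon vs" "u < length vs" "k < length vs" "k \<noteq> Suc u mod length vs"
    "cross (edge vs u) d < 0" "cross (edge vs (Suc u)) d > 0"
  shows "cross d (vtx vs k - vtx vs (Suc u)) < 0"
proof -
  let ?N = "length vs"
  have N3: "?N \<ge> 3" using assms(1) convex_len by auto
  define A where "A = edge vs u"
  define B where "B = edge vs (Suc u)"
  define Z where "Z = vtx vs k - vtx vs (Suc u)"
  define u1 where "u1 = Suc u mod ?N"
  have u1N: "u1 < ?N" using mod3_facts(7)[OF N3 assms(2)] u1_def by simp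
  have eB: "edge vs u1 = B" unfolding B_def u1_def by (metis edge_mod)
  have vu1: "vtx vs u1 = vtx vs (Suc u)" unfolding u1_def by (metis vtx_mod)
  have AB: "cross A B < 0" using CFc[OF assms(1,2)] A_def B_def by simp
  have id: "cross A B * cross d Z = cross Z B * cross d A + cross A Z * cross d B"
    by (simp add: cross_eq algebra_simps)
  have AZ_eq: "cross A Z = cross A (vtx vs k - vtx vs u)"
    by (simp add: A_def Z_def edge_def cross_eq algebra_simps)
  have AZ: "cross A Z \<le> 0" using C0[OF assms(1,2,3)] AZ_eq A_def by simp
  have BZ_eq: "cross B Z = cross (edge vs u1) (vtx vs k - vtx vs u1)" by (simp add: eB vu1 Z_def)
  have BZ: "cross B Z \<le> 0" using C0[OF assms(1) u1N assms(3)] BZ_eq by simp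
  have strict: "cross A Z < 0 \<or> cross B Z < 0"
  proof (cases "k = u")
    case True
    have "k \<noteq> Suc u1 mod ?N"
      using mod3_facts(1)[OF N3 assms(2)] True u1_def by (simp add: mod_Suc_eq)
    hence "cross (edge vs u1) (vtx vs k - vtx vs u1) < 0"
      using C1[OF assms(1) u1N assms(3)] assms(4) u1_def by auto
    thus ?thesis using BZ_eq by simp
  next
    case False
    hence "cross (edge vs u) (vtx vs k - vtx vs u) < 0" using C1[OF assms(1,2,3)] assms(4) by auto
    thus ?thesis using AZ_eq A_def by simp
  qed
  have dA: "cross d A > 0" using assms(5) A_def cross_anti[of d A] by simp
  have dB: "cross d B < 0" using assms(6) B_def cross_anti[of d B] by simp
  have "cross Z B * cross d A \<ge> 0" using BZ dA cross_anti[of Z B] by (simp add: mult_nonpos_nonneg)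
  moreover have "cross A Z * cross d B \<ge> 0" using AZ dB by (simp add: mult_nonpos_nonpos)
  moreover have "cross Z B * cross d A > 0 \<or> cross A Z * cross d B > 0"
    using strict dA dB cross_anti[of Z B] by (auto simp: mult_neg_neg mult_neg_pos)
  ultimately have "cross A B * cross d Z > 0" using id by linarith
  with AB show ?thesis unfolding Z_def by (simp add: zero_less_mult_iff)
qed

lemma L4:
  assumes "convex_cw_polygon vs" "u < length vs" "w < length vs"
    "cross (edge vs u) d < 0" "cross (edge vs (Suc u)) d > 0"
    "cross (edge vs w) d < 0" "cross (edge vs (Suc w)) d > 0"
  shows "u = w"
proof (rule ccontr)
  let ?N = "length vs"
  have N3: "?N \<ge> 3" using assms(1) convex_len by auto
  assume "u \<noteq> w"
  hence ne: "Suc w mod ?N \<noteq> Suc u mod ?N" using suc_mod_inj assms(2,3) by metis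
  have "cross d (vtx vs (Suc w mod ?N) - vtx vs (Suc u)) < 0"
    using LM[OF assms(1,2) _ ne assms(4,5)] mod3_facts(7)[OF N3 assms(3)] by blast
  moreover have "cross d (vtx vs (Suc u mod ?N) - vtx vs (Suc w)) < 0"
    using LM[OF assms(1,3) _ ne[symmetric] assms(6,7)] mod3_facts(7)[OF N3 assms(2)] by blast
  ultimately show False by (simp add: vtx_mod cross_diff2)
qed

lemma L5:
  assumes "dotc A X \<ge> 0" "dotc C X \<le> 0" "cross A X * cross C X > 0"
    "cross A d < 0" "cross X d > 0" "cross C d > 0"
  shows False
proof -
  have X0: "dotc X X > 0"
  proof -
    have "X \<noteq> 0" using assms(5) by (auto simp: cross_eq)
    thus ?thesis by (simp add: dotc_eq complex_eq_iff sum_squares_gt_zero_iff)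
  qed
  have id1: "dotc X X * cross A d = dotc A X * cross X d + cross A X * dotc X d"
    by (simp add: dotc_eq cross_eq algebra_simps)
  have id2: "dotc X X * cross C d = dotc C X * cross X d + cross C X * dotc X d"
    by (simp add: dotc_eq cross_eq algebra_simps)
  have "dotc X X * cross A d < 0" using X0 assms(4) by (simp add: mult_pos_neg)
  moreover have "dotc A X * cross X d \<ge> 0" using assms(1,5) by simp
  ultimately have p1: "cross A X * dotc X d < 0" using id1 by linarith
  have "dotc X X * cross C d > 0" using X0 assms(6) by simp
  moreover have "dotc C X * cross X d \<le> 0" using assms(2,5) by (simp add: mult_nonpos_nonneg)
  ultimately have p2: "cross C X * dotc X d > 0" using id2 by linarith
  have "(cross A X * dotc X d) * (cross C X * dotc X d) < 0" using p1 p2 by (simp add: mult_neg_pos)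
  moreover have "(cross A X * dotc X d) * (cross C X * dotc X d) = (cross A X * cross C X) * (dotc X d)^2"
    by (simp add: power2_eq_square algebra_simps)
  moreover have "(cross A X * cross C X) * (dotc X d)^2 \<ge> 0" using assms(3) by simp
  ultimately show False by linarith
qed




lemma frac_bounds:
  fixes al be :: real
  assumes "al * be < 0" shows "0 < al / (al - be)" "al / (al - be) < 1"
proof -
  have "(al > 0 \<and> be < 0) \<or> (al < 0 \<and> be > 0)" using assms by (auto simp: mult_less_0_iff)
  then show "0 < al / (al - be)" "al / (al - be) < 1"
    by (auto simp: zero_less_divide_iff divide_less_eq)
qed


lemma exit_forced:
  assumes cv: "convex_cw_polygon vs" and ab: "a \<noteq> b" and seg: "open_segment a b \<subseteq> poly_interior vs"
    and uN: "u < length vs" and au: "a \<in> open_side vs u" and xN: "x < length vs" and xu: "x \<noteq> u"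
    and bd: "(\<exists>w<length vs. b \<in> open_side vs w) \<or> b \<in> set vs"
    and pr: "cross (b - a) (vtx vs x - a) * cross (b - a) (vtx vs (Suc x) - a) < 0"
  shows "b \<in> open_side vs x"
proof -
  define D where "D = b - a"
  define al where "al = cross D (vtx vs x - a)"
  define be where "be = cross D (vtx vs (Suc x) - a)"
  have pr': "al * be < 0" using pr by (simp add: al_def be_def D_def)
  have ne: "al - be \<noteq> 0" using pr' by (auto simp: mult_less_0_iff)
  define s where "s = al / (al - be)"
  have s0: "s > 0" and s1: "s < 1" using frac_bounds[OF pr'] unfolding s_def by auto
  define c where "c = vtx vs x + of_real s * edge vs x"
  have Dc: "cross D (c - a) = 0"
  proof -
    have "cross D (c - a) = al + s * (be - al)"
      unfolding c_def al_def be_def edge_def by (simp add: cross_eq algebra_simps)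
    also have "\<dots> = 0" unfolding s_def using ne by (simp add: field_simps)
    finally show ?thesis .
  qed
  have ex: "vtx vs x \<noteq> vtx vs (Suc x)"
  proof
    assume "vtx vs x = vtx vs (Suc x)" thus False using ne al_def be_def by simp
  qed
  have cx: "c \<in> open_side vs x"
    unfolding open_side_def in_segment(2) using ex s0 s1
    by (intro conjI exI[of _ s]) (auto simp: c_def edge_def scaleR_conv_of_real algebra_simps)
  have D0: "D \<noteq> 0" using ab D_def by simp
  obtain mu where mu: "c - a = of_real mu * D" using real_dir[OF D0 Dc] by blast
  have "cross (edge vs u) (c - vtx vs u) < 0" using C2(2)[OF cv uN xN cx] xu by simp
  moreover have "cross (edge vs u) (c - vtx vs u) = cross (edge vs u) (a - vtx vs u) + mu * cross (edge vs u) D"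
  proof -
    have "c - vtx vs u = (a - vtx vs u) + of_real mu * D" using mu by (simp add: algebra_simps)
    thus ?thesis by (simp only: cross_add2 cross_scale2)
  qed
  moreover have "cross (edge vs u) (a - vtx vs u) = 0" using os_on_line[OF au] .
  moreover have "cross (edge vs u) D < 0" using entry_sign[OF cv ab seg uN au] D_def by simp
  ultimately have mu0: "mu > 0" by (simp add: mult_less_0_iff)
  consider "mu < 1" | "mu = 1" | "mu > 1" by linarith
  then show ?thesis
  proof cases
    case 1
    have "c \<in> open_segment a b"
      unfolding in_segment(2) using ab mu0 1 mu
      by (intro conjI exI[of _ mu]) (auto simp: D_def scaleR_conv_of_real algebra_simps)
    hence "c \<in> poly_interior vs" using seg by auto
    thus ?thesis using C4(1) xN cx by blast
  next
    case 2
    hence "c = b" using mu D_def by simp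
    thus ?thesis using cx by simp
  next
    case 3
    define r where "r = 1 / mu"
    have r0: "0 < r" "r < 1" using 3 r_def by auto
    have bc: "b = a + of_real r * (c - a)" using mu 3 by (simp add: r_def D_def)
    have "b \<in> poly_interior vs"
      unfolding poly_interior_def
    proof (intro CollectI allI impI)
      fix y assume yN: "y < length vs"
      have eq: "cross (edge vs y) (b - vtx vs y) =
        (1 - r) * cross (edge vs y) (a - vtx vs y) + r * cross (edge vs y) (c - vtx vs y)"
        unfolding bc by (simp add: cross_eq algebra_simps)
      have t1: "cross (edge vs y) (a - vtx vs y) \<le> 0" using C2(1)[OF cv yN uN au] .
      have t2: "cross (edge vs y) (c - vtx vs y) \<le> 0" using C2(1)[OF cv yN xN cx] .
      have "cross (edge vs y) (a - vtx vs y) < 0 \<or> cross (edge vs y) (c - vtx vs y) < 0"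
        using C2(2)[OF cv yN uN au] C2(2)[OF cv yN xN cx] xu by blast
      thus "cross (edge vs y) (b - vtx vs y) < 0" unfolding eq using comb_neg[OF r0 t1 t2] by blast
    qed
    thus ?thesis using bd C4 by blast
  qed
qed

lemma entry_forced:
  assumes cv: "convex_cw_polygon vs" and ab: "a \<noteq> b" and seg: "open_segment a b \<subseteq> poly_interior vs"
    and xN: "x < length vs" and bx: "b \<in> open_side vs x" and uN: "u < length vs" and xu: "u \<noteq> x"
    and ad: "(\<exists>w<length vs. a \<in> open_side vs w) \<or> a \<in> set vs"
    and pr: "cross (b - a) (vtx vs u - a) * cross (b - a) (vtx vs (Suc u) - a) < 0"
  shows "a \<in> open_side vs u"
proof -
  have e: "\<And>z. cross (a - b) (z - b) = - cross (b - a) (z - a)"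
    by (simp add: cross_eq algebra_simps)
  show ?thesis
    apply (rule exit_forced[OF cv ab[symmetric] _ xN bx uN xu ad])
    using seg apply (simp add: open_segment_commute)
    using pr by (simp add: e)
qed




lemma dotc_sym: "dotc a b = dotc b a" by (simp add: dotc_eq algebra_simps)
lemma dotc_minus1: "dotc (- a) b = - dotc a b" by (simp add: dotc_eq)
lemma dotc_minus2: "dotc a (- b) = - dotc a b" by (simp add: dotc_eq)

lemma os_between:
  assumes "z \<in> open_side vs w"
  shows "cross (edge vs w) d < 0 \<Longrightarrow> cross d (vtx vs w) < cross d z \<and> cross d z < cross d (vtx vs (Suc w))"
    and "cross (edge vs w) d > 0 \<Longrightarrow> cross d (vtx vs (Suc w)) < cross d z \<and> cross d z < cross d (vtx vs w)"
proof -
  obtain s where s: "0 < s" "s < 1" "z = vtx vs w + of_real s * edge vs w"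
    using os_param[OF assms] by blast
  have e1: "cross d z = cross d (vtx vs w) + s * cross d (edge vs w)"
    using s(3) by (simp add: cross_add2 cross_scale2)
  have e2: "cross d (vtx vs (Suc w)) = cross d (vtx vs w) + cross d (edge vs w)"
    by (simp add: edge_def cross_diff2)
  have e3: "cross d (edge vs w) = - cross (edge vs w) d" using cross_anti .
  show "cross (edge vs w) d < 0 \<Longrightarrow> cross d (vtx vs w) < cross d z \<and> cross d z < cross d (vtx vs (Suc w))"
  proof -
    assume h: "cross (edge vs w) d < 0"
    hence k: "cross d (edge vs w) > 0" using e3 by simp
    have "s * cross d (edge vs w) > 0" "s * cross d (edge vs w) < cross d (edge vs w)"
      using k s by (auto simp: mult_less_cancel_right2)
    thus ?thesis using e1 e2 by linarith
  qed
  show "cross (edge vs w) d > 0 \<Longrightarrow> cross d (vtx vs (Suc w)) < cross d z \<and> cross d z < cross d (vtx vs w)"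
  proof -
    assume h: "cross (edge vs w) d > 0"
    hence k: "cross d (edge vs w) < 0" using e3 by simp
    have "s * cross d (edge vs w) < 0" "s * cross d (edge vs w) > cross d (edge vs w)"
      using k s by (auto simp: mult_pos_neg mult_less_cancel_right1)
    thus ?thesis using e1 e2 by linarith
  qed
qed

locale SC =
  fixes polys :: "complex list list" and glue :: "nat \<times> nat \<Rightarrow> nat \<times> nat"
    and segs :: "(nat \<times> complex \<times> complex) list"
  assumes TS: "translation_surface_P1P2 polys glue"
    and TR: "transversal_saddle_connection polys glue segs"
begin

abbreviation pp where "pp t \<equiv> fst (segs ! t)"
abbreviation aa where "aa t \<equiv> fst (snd (segs ! t))"
abbreviation bb where "bb t \<equiv> snd (snd (segs ! t))"
abbreviation vv where "vv t \<equiv> polys ! pp t"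

definition dd where "dd = bb 0 - aa 0"
definition G where "G t = cross dd (aa t)"
definition ent where "ent t = (THE u. u < length (vv t) \<and> aa t \<in> open_side (vv t) u)"
definition ext where "ext t = (THE u. u < length (vv t) \<and> bb t \<in> open_side (vv t) u)"
definition TT where "TT s = cross dd (vtx (polys ! fst (glue s)) (Suc (snd (glue s))) - vtx (polys ! fst s) (snd s))"

lemma segs_ne: "segs \<noteq> []" using TR unfolding transversal_saddle_connection_def by blast

lemma seg_ok:
  assumes "t < length segs"
  shows "pp t < length polys" "aa t \<noteq> bb t" "open_segment (aa t) (bb t) \<subseteq> poly_interior (vv t)"
  using TR assms unfolding transversal_saddle_connection_def by blast+

lemma poly_ok:
  assumes "t < length segs"
  shows "convex_cw_polygon (vv t)" "angles_obtuse_or_right (vv t)"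
  using TS seg_ok(1)[OF assms] unfolding translation_surface_P1P2_def by auto

lemma poly_ok':
  assumes "p < length polys"
  shows "convex_cw_polygon (polys ! p)" "angles_obtuse_or_right (polys ! p)"
  using TS assms unfolding translation_surface_P1P2_def by auto

lemma glue_props:
  assumes "p < length polys" "u < length (polys ! p)"
  shows "fst (glue (p,u)) < length polys" "snd (glue (p,u)) < length (polys ! fst (glue (p,u)))"
    "glue (glue (p,u)) = (p,u)"
    "edge (polys ! fst (glue (p,u))) (snd (glue (p,u))) = - edge (polys ! p) u"
  using TS assms unfolding translation_surface_P1P2_def is_side_idx_def by auto

lemma link:
  assumes "Suc t < length segs"
  shows "\<exists>c>0. bb (Suc t) - aa (Suc t) = of_real c * (bb t - aa t)"
    "\<exists>u<length (vv t). bb t \<in> open_side (vv t) u \<and> fst (glue (pp t, u)) = pp (Suc t) \<and>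
        aa (Suc t) = glue_map polys glue (pp t, u) (bb t)"
proof -
  have "(let (p, a, b) = segs ! t; (q, a', b') = segs ! Suc t in
          (\<exists>c > 0. b' - a' = of_real c * (b - a)) \<and>
          (\<exists>u < length (polys ! p). b \<in> open_side (polys ! p) u \<and>
              fst (glue (p, u)) = q \<and> a' = glue_map polys glue (p, u) b))"
    using TR assms unfolding transversal_saddle_connection_def by blast
  thus "\<exists>c>0. bb (Suc t) - aa (Suc t) = of_real c * (bb t - aa t)"
    "\<exists>u<length (vv t). bb t \<in> open_side (vv t) u \<and> fst (glue (pp t, u)) = pp (Suc t) \<and>
        aa (Suc t) = glue_map polys glue (pp t, u) (bb t)"
    by (simp_all add: Let_def split_beta)
qed

lemma first_vertex: "aa 0 \<in> set (vv 0)"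
  using TR segs_ne unfolding transversal_saddle_connection_def is_vertex_def by (simp add: hd_conv_nth)

lemma last_vertex: "bb (length segs - 1) \<in> set (vv (length segs - 1))"
  using TR segs_ne unfolding transversal_saddle_connection_def is_vertex_def by (simp add: last_conv_nth)

lemma dir: "t < length segs \<Longrightarrow> \<exists>c>0. bb t - aa t = of_real c * dd"
proof (induction t)
  case 0
  then show ?case by (intro exI[of _ 1]) (simp add: dd_def)
next
  case (Suc t)
  obtain c where c: "c > 0" "bb t - aa t = of_real c * dd" using Suc by auto
  obtain c' where c': "c' > 0" "bb (Suc t) - aa (Suc t) = of_real c' * (bb t - aa t)" using link(1)[OF Suc.prems] by blast
  show ?case using c c' by (intro exI[of _ "c' * c"]) simp
qed

lemma G_b: "t < length segs \<Longrightarrow> cross dd (bb t) = G t"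
proof -
  assume t: "t < length segs"
  obtain c where "bb t = aa t + of_real c * dd" using dir[OF t] by (auto simp: algebra_simps)
  thus ?thesis by (simp add: G_def cross_add2 cross_scale2 cross_self)
qed

lemma ent_sign: "t < length segs \<Longrightarrow> u < length (vv t) \<Longrightarrow> aa t \<in> open_side (vv t) u \<Longrightarrow>
    cross (edge (vv t) u) dd < 0"
proof -
  assume t: "t < length segs" and u: "u < length (vv t)" and a: "aa t \<in> open_side (vv t) u"
  obtain c where c: "c > 0" "bb t - aa t = of_real c * dd" using dir[OF t] by blast
  have "cross (edge (vv t) u) (bb t - aa t) < 0"
    using entry_sign[OF poly_ok(1)[OF t] seg_ok(2,3)[OF t] u a] .
  thus ?thesis using c by (simp add: cross_scale2 mult_less_0_iff)
qed

lemma ext_sign: "t < length segs \<Longrightarrow> x < length (vv t) \<Longrightarrow> bb t \<in> open_side (vv t) x \<Longrightarrow>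
    cross (edge (vv t) x) dd > 0"
proof -
  assume t: "t < length segs" and u: "x < length (vv t)" and a: "bb t \<in> open_side (vv t) x"
  obtain c where c: "c > 0" "bb t - aa t = of_real c * dd" using dir[OF t] by blast
  have "cross (edge (vv t) x) (bb t - aa t) > 0"
    using exit_sign[OF poly_ok(1)[OF t] seg_ok(2,3)[OF t] u a] .
  thus ?thesis using c by (simp add: cross_scale2 zero_less_mult_iff)
qed

lemma ent_unique: "t < length segs \<Longrightarrow> u < length (vv t) \<Longrightarrow> aa t \<in> open_side (vv t) u \<Longrightarrow> ent t = u"
  unfolding ent_def by (rule the_equality) (auto intro: C5[OF poly_ok(1)])

lemma ext_unique: "t < length segs \<Longrightarrow> u < length (vv t) \<Longrightarrow> bb t \<in> open_side (vv t) u \<Longrightarrow> ext t = u"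
  unfolding ext_def by (rule the_equality) (auto intro: C5[OF poly_ok(1)])

lemma chain:
  assumes st: "Suc t < length segs"
  shows "ext t < length (vv t)" "bb t \<in> open_side (vv t) (ext t)"
    "glue (pp t, ext t) = (pp (Suc t), ent (Suc t))"
    "ent (Suc t) < length (vv (Suc t))" "aa (Suc t) \<in> open_side (vv (Suc t)) (ent (Suc t))"
    "G (Suc t) = G t + TT (pp t, ext t)"
proof -
  have t: "t < length segs" using st by simp
  obtain u where u: "u < length (vv t)" "bb t \<in> open_side (vv t) u" "fst (glue (pp t, u)) = pp (Suc t)"
     "aa (Suc t) = glue_map polys glue (pp t, u) (bb t)" using link(2)[OF st] by blast
  have ex: "ext t = u" using ext_unique[OF t u(1,2)] .
  show "ext t < length (vv t)" "bb t \<in> open_side (vv t) (ext t)" using u ex by auto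
  have sid: "is_side_idx polys (pp t, u)" using seg_ok(1)[OF t] u(1) by (simp add: is_side_idx_def)
  have ao: "aa (Suc t) \<in> open_side (vv (Suc t)) (snd (glue (pp t, u)))"
    using glue_os[OF TS sid] u by simp
  have sl: "snd (glue (pp t, u)) < length (vv (Suc t))"
    using glue_props(2)[OF seg_ok(1)[OF t] u(1)] u(3) by simp
  have en: "ent (Suc t) = snd (glue (pp t, u))" using ent_unique[OF st sl ao] .
  show "glue (pp t, ext t) = (pp (Suc t), ent (Suc t))" using ex en u(3) by (simp add: prod_eq_iff)
  show "ent (Suc t) < length (vv (Suc t))" "aa (Suc t) \<in> open_side (vv (Suc t)) (ent (Suc t))"
    using en sl ao by auto
  show "G (Suc t) = G t + TT (pp t, ext t)"
    unfolding G_def TT_def ex u(4) glue_map_def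
    using G_b[OF t] by (simp add: G_def cross_add2 cross_diff2)
qed

lemma backl:
  assumes st: "Suc t < length segs"
  shows "glue (pp (Suc t), ent (Suc t)) = (pp t, ext t)"
  using chain(3)[OF st] glue_props(3)[OF seg_ok(1) chain(1)[OF st]] st by (metis Suc_lessD)

lemma adj_pos_iff: "adj_pos polys segs t \<longleftrightarrow> t < length segs \<and>
   (\<exists>u<length (vv t). aa t \<in> open_side (vv t) u \<and> bb t \<in> open_side (vv t) (Suc u mod length (vv t)))"
  unfolding adj_pos_def by (simp add: Let_def split_beta)

lemma adj_neg_iff: "adj_neg polys segs t \<longleftrightarrow> t < length segs \<and>
   (\<exists>u<length (vv t). aa t \<in> open_side (vv t) u \<and> bb t \<in> open_side (vv t) ((u + length (vv t) - 1) mod length (vv t)))"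
  unfolding adj_neg_def by (simp add: Let_def split_beta)

lemma N3: "t < length segs \<Longrightarrow> length (vv t) \<ge> 3" using poly_ok(1) convex_len by blast

lemma pos_info:
  assumes "adj_pos polys segs t"
  shows "t < length segs" "ent t < length (vv t)" "aa t \<in> open_side (vv t) (ent t)"
    "ext t = Suc (ent t) mod length (vv t)" "bb t \<in> open_side (vv t) (ext t)"
proof -
  obtain u where u: "t < length segs" "u < length (vv t)" "aa t \<in> open_side (vv t) u"
    "bb t \<in> open_side (vv t) (Suc u mod length (vv t))" using assms adj_pos_iff by blast
  have e: "ent t = u" using ent_unique u by blast
  have x: "ext t = Suc u mod length (vv t)" proof -
    have "0 < length (vv t)" using N3[OF u(1)] by linarith
    thus ?thesis using ext_unique[OF u(1) _ u(4)] by simp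
  qed
  show "t < length segs" "ent t < length (vv t)" "aa t \<in> open_side (vv t) (ent t)"
    "ext t = Suc (ent t) mod length (vv t)" "bb t \<in> open_side (vv t) (ext t)" using u e x by auto
qed

lemma neg_info:
  assumes "adj_neg polys segs t"
  shows "t < length segs" "ent t < length (vv t)" "aa t \<in> open_side (vv t) (ent t)"
    "ext t = (ent t + length (vv t) - 1) mod length (vv t)" "bb t \<in> open_side (vv t) (ext t)"
proof -
  obtain u where u: "t < length segs" "u < length (vv t)" "aa t \<in> open_side (vv t) u"
    "bb t \<in> open_side (vv t) ((u + length (vv t) - 1) mod length (vv t))" using assms adj_neg_iff by blast
  have e: "ent t = u" using ent_unique u by blast
  have x: "ext t = (u + length (vv t) - 1) mod length (vv t)" proof -
    have "0 < length (vv t)" using N3[OF u(1)] by linarith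
    thus ?thesis using ext_unique[OF u(1) _ u(4)] by simp
  qed
  show "t < length segs" "ent t < length (vv t)" "aa t \<in> open_side (vv t) (ent t)"
    "ext t = (ent t + length (vv t) - 1) mod length (vv t)" "bb t \<in> open_side (vv t) (ext t)" using u e x by auto
qed

lemma pos_not_neg: "adj_pos polys segs t \<Longrightarrow> \<not> adj_neg polys segs t"
  using pos_info neg_info mod3_facts(4) N3 by metis


lemma glue_edge: "Suc t < length segs \<Longrightarrow> edge (vv (Suc t)) (ent (Suc t)) = - edge (vv t) (ext t)"
proof -
  assume st: "Suc t < length segs"
  hence t: "t < length segs" by simp
  have g: "glue (pp t, ext t) = (pp (Suc t), ent (Suc t))" using chain(3)[OF st] .
  show ?thesis using glue_props(4)[OF seg_ok(1)[OF t] chain(1)[OF st]] unfolding g by simp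
qed

lemma alt_pos:
  assumes st: "Suc t < length segs" and pt: "adj_pos polys segs t" and ps: "adj_pos polys segs (Suc t)"
  shows False
proof -
  have t: "t < length segs" using st by simp
  let ?p = "vv t" and ?q = "vv (Suc t)" and ?u = "ent t" and ?x = "ext t" and ?y = "ent (Suc t)" and ?z = "ext (Suc t)"
  note I1 = pos_info[OF pt] and I2 = pos_info[OF ps]
  define A where "A = edge ?p ?u"
  define X where "X = edge ?p ?x"
  define C where "C = edge ?q ?z"
  have X': "X = edge ?p (Suc ?u)" unfolding X_def I1(4) by (metis edge_mod)
  have C': "C = edge ?q (Suc ?y)" unfolding C_def I2(4) by (metis edge_mod)
  have E: "edge ?q ?y = - X" using glue_edge[OF st] X_def by simp
  have h1: "dotc A X \<ge> 0" using CF(1)[OF poly_ok[OF t] I1(2)] A_def X' by simp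
  have h2: "cross A X < 0" using CFc[OF poly_ok(1)[OF t] I1(2)] A_def X' by simp
  have h3: "dotc (- X) C \<ge> 0" using CF(1)[OF poly_ok[OF st] I2(2)] E C' by simp
  have h4: "cross (- X) C < 0" using CFc[OF poly_ok(1)[OF st] I2(2)] E C' by simp
  have d1: "cross A dd < 0" using ent_sign[OF t I1(2,3)] A_def by simp
  have xN: "?x < length ?p" using chain(1)[OF st] .
  have zN: "?z < length ?q" using I2(4) mod3_facts(7)[OF N3[OF st] I2(2)] by simp
  have d2: "cross X dd > 0" using ext_sign[OF t xN I1(5)] X_def by simp
  have d3: "cross C dd > 0" using ext_sign[OF st zN I2(5)] C_def by simp
  have "dotc C X = - dotc (- X) C" by (simp add: dotc_eq)
  hence "dotc C X \<le> 0" using h3 by linarith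
  moreover have "cross C X = cross (- X) C" by (simp add: cross_eq)
  hence "cross A X * cross C X > 0"
    using h2 h4 by (simp add: mult_neg_neg)
  ultimately show False using L5[OF h1 _ _ d1 d2 d3] by blast
qed

lemma alt_neg:
  assumes st: "Suc t < length segs" and pt: "adj_neg polys segs t" and ps: "adj_neg polys segs (Suc t)"
  shows False
proof -
  have t: "t < length segs" using st by simp
  let ?p = "vv t" and ?q = "vv (Suc t)" and ?u = "ent t" and ?x = "ext t" and ?y = "ent (Suc t)" and ?z = "ext (Suc t)"
  note I1 = neg_info[OF pt] and I2 = neg_info[OF ps]
  define A where "A = edge ?p ?u"
  define X where "X = edge ?p ?x"
  define C where "C = edge ?q ?z"
  have xN: "?x < length ?p" using chain(1)[OF st] .
  have zN: "?z < length ?q" using I2(4) mod3_facts(6)[OF N3[OF st] I2(2)] by simp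
  have sx: "Suc ?x mod length ?p = ?u" using I1(4) mod3_facts(5)[OF N3[OF t] I1(2)] by simp
  have sz: "Suc ?z mod length ?q = ?y" using I2(4) mod3_facts(5)[OF N3[OF st] I2(2)] by simp
  have A': "A = edge ?p (Suc ?x)" unfolding A_def by (metis edge_mod sx)
  have E: "edge ?q (Suc ?z) = - X" using glue_edge[OF st] X_def by (metis edge_mod sz)
  have h1: "dotc X A \<ge> 0" using CF(1)[OF poly_ok[OF t] xN] A' X_def by simp
  have h2: "cross X A < 0" using CFc[OF poly_ok(1)[OF t] xN] A' X_def by simp
  have h3: "dotc C (- X) \<ge> 0" using CF(1)[OF poly_ok[OF st] zN] E C_def by simp
  have h4: "cross C (- X) < 0" using CFc[OF poly_ok(1)[OF st] zN] E C_def by simp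
  have d1: "cross A dd < 0" using ent_sign[OF t I1(2,3)] A_def by simp
  have d2: "cross X dd > 0" using ext_sign[OF t xN I1(5)] X_def by simp
  have d3: "cross C dd > 0" using ext_sign[OF st zN I2(5)] C_def by simp
  have "dotc A X \<ge> 0" using h1 by (simp add: dotc_sym)
  moreover have "dotc C X \<le> 0" using h3 by (simp add: dotc_minus2)
  moreover have "cross A X = - cross X A" "cross C X = - cross C (- X)" by (simp_all add: cross_eq)
  hence "cross A X * cross C X > 0"
    using h2 h4 by (simp add: mult_neg_neg)
  ultimately show False using L5[OF _ _ _ d1 d2 d3] by blast
qed

lemma adjacent_cases: "adjacent_seg polys segs t \<Longrightarrow> adj_pos polys segs t \<or> adj_neg polys segs t"
  by (simp add: adjacent_seg_def)

lemma alt_step: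
  assumes st: "Suc t < length segs" and "adjacent_seg polys segs t" "adjacent_seg polys segs (Suc t)"
  shows "adj_pos polys segs (Suc t) \<longleftrightarrow> \<not> adj_pos polys segs t"
proof
  assume "adj_pos polys segs (Suc t)"
  thus "\<not> adj_pos polys segs t" using alt_pos[OF st] by blast
next
  assume "\<not> adj_pos polys segs t"
  hence "adj_neg polys segs t" using assms(2) unfolding adjacent_seg_def by blast
  hence "\<not> adj_neg polys segs (Suc t)" using alt_neg[OF st] by blast
  thus "adj_pos polys segs (Suc t)" using assms(3) unfolding adjacent_seg_def by blast
qed

lemma corner_det:
  assumes "adjacent_seg polys segs t" "adjacent_seg polys segs t'" "pp t = pp t'"
    "adj_pos polys segs t \<longleftrightarrow> adj_pos polys segs t'"
  shows "ent t = ent t' \<longleftrightarrow> ext t = ext t'"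
proof (cases "adj_pos polys segs t")
  case True
  hence p2: "adj_pos polys segs t'" using assms by simp
  note I1 = pos_info[OF True] and I2 = pos_info[OF p2]
  have L: "length (vv t') = length (vv t)" using assms(3) by simp
  show ?thesis
  proof
    assume "ent t = ent t'" thus "ext t = ext t'" using I1(4) I2(4) L by simp
  next
    assume "ext t = ext t'"
    hence "Suc (ent t) mod length (vv t) = Suc (ent t') mod length (vv t)" using I1(4) I2(4) L by simp
    thus "ent t = ent t'" using suc_mod_inj I1(2) I2(2) L by metis
  qed
next
  case False
  hence n1: "adj_neg polys segs t" and n2: "adj_neg polys segs t'" using assms unfolding adjacent_seg_def by auto
  note I1 = neg_info[OF n1] and I2 = neg_info[OF n2]
  have s1: "Suc (ext t) mod length (vv t) = ent t" using I1(4) mod3_facts(5)[OF N3[OF I1(1)] I1(2)] by simp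
  have s2: "Suc (ext t') mod length (vv t') = ent t'" using I2(4) mod3_facts(5)[OF N3[OF I2(1)] I2(2)] by simp
  have L: "length (vv t') = length (vv t)" using assms(3) by simp
  show ?thesis
  proof
    assume "ent t = ent t'" thus "ext t = ext t'" using I1(4) I2(4) L by simp
  next
    assume "ext t = ext t'"
    thus "ent t = ent t'" using s1 s2 L by metis
  qed
qed

lemma same_corner:
  assumes t: "t < length segs" and t': "t' < length segs" and pe: "pp t = pp t'"
    and sg: "(adj_pos polys segs t \<and> adj_pos polys segs t') \<or> (adj_neg polys segs t \<and> adj_neg polys segs t')"
  shows "ent t = ent t' \<and> ext t = ext t'"
proof -
  have cv: "convex_cw_polygon (vv t)" using poly_ok(1)[OF t] .
  have V: "vv t' = vv t" using pe by simp
  have N: "0 < length (vv t)" using N3[OF t] by linarith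
  from sg show ?thesis
  proof
    assume pp2: "adj_pos polys segs t \<and> adj_pos polys segs t'"
    note I1 = pos_info[OF pp2[THEN conjunct1]] and I2 = pos_info[OF pp2[THEN conjunct2]]
    have a1: "cross (edge (vv t) (ent t)) dd < 0" using ent_sign[OF t I1(2,3)] .
    have a2: "cross (edge (vv t) (ent t')) dd < 0" using ent_sign[OF t' I2(2,3)] V by simp
    have x1N: "ext t < length (vv t)" using I1(4) N by simp
    have x2N: "ext t' < length (vv t')" using I2(4) N V by simp
    have b1: "cross (edge (vv t) (Suc (ent t))) dd > 0"
      using ext_sign[OF t x1N I1(5)] I1(4) by (metis edge_mod)
    have b2: "cross (edge (vv t) (Suc (ent t'))) dd > 0"
      using ext_sign[OF t' x2N I2(5)] I2(4) V by (metis edge_mod)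
    have "ent t = ent t'" using L4[OF cv I1(2) _ a1 b1 a2 b2] I2(2) V by simp
    thus ?thesis using I1(4) I2(4) V by simp
  next
    assume pp2: "adj_neg polys segs t \<and> adj_neg polys segs t'"
    note I1 = neg_info[OF pp2[THEN conjunct1]] and I2 = neg_info[OF pp2[THEN conjunct2]]
    have x1N: "ext t < length (vv t)" using I1(4) N by simp
    have x2N: "ext t' < length (vv t)" using I2(4) N V by simp
    have s1: "Suc (ext t) mod length (vv t) = ent t" using I1(4) mod3_facts(5)[OF N3[OF t] I1(2)] by simp
    have s2: "Suc (ext t') mod length (vv t) = ent t'" using I2(4) mod3_facts(5)[OF N3[OF t'] I2(2)] V by simp
    have a1: "cross (edge (vv t) (ext t)) (- dd) < 0" using ext_sign[OF t x1N I1(5)] by (simp add: cross_minus2)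
    have a2: "cross (edge (vv t) (ext t')) (- dd) < 0" using ext_sign[OF t' _ I2(5)] x2N V by (simp add: cross_minus2)
    have b1: "cross (edge (vv t) (Suc (ext t))) (- dd) > 0"
      using ent_sign[OF t I1(2,3)] s1 by (metis edge_mod cross_minus2 neg_0_less_iff_less)
    have b2: "cross (edge (vv t) (Suc (ext t'))) (- dd) > 0"
      using ent_sign[OF t' I2(2,3)] s2 V by (metis edge_mod cross_minus2 neg_0_less_iff_less)
    have "ext t = ext t'" using L4[OF cv x1N x2N a1 b1 a2 b2] .
    thus ?thesis using s1 s2 by metis
  qed
qed

lemma prod_scale:
  assumes t: "t < length segs"
  shows "cross (bb t - aa t) (z1 - aa t) * cross (bb t - aa t) (z2 - aa t) < 0 \<longleftrightarrow>
         (cross dd z1 - G t) * (cross dd z2 - G t) < 0"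
proof -
  obtain c where c: "c > 0" "bb t - aa t = of_real c * dd" using dir[OF t] by blast
  have "cross (bb t - aa t) (z1 - aa t) * cross (bb t - aa t) (z2 - aa t) =
        (c * c) * ((cross dd z1 - G t) * (cross dd z2 - G t))"
    unfolding c(2) G_def by (simp only: cross_scale1 cross_diff2) (simp add: algebra_simps)
  moreover have "c * c > 0" using c by simp
  ultimately show ?thesis by (simp add: mult_less_0_iff)
qed

end



context SC begin

lemma adj_info:
  assumes "adjacent_seg polys segs t"
  shows "t < length segs" "ent t < length (vv t)" "aa t \<in> open_side (vv t) (ent t)"
    "ext t < length (vv t)" "bb t \<in> open_side (vv t) (ext t)"
proof -
  have "adj_pos polys segs t \<or> adj_neg polys segs t" using assms adjacent_cases by blast
  hence "t < length segs \<and> ent t < length (vv t) \<and> aa t \<in> open_side (vv t) (ent t) \<and>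
    ext t < length (vv t) \<and> bb t \<in> open_side (vv t) (ext t)"
  proof
    assume h: "adj_pos polys segs t"
    show ?thesis
      using pos_info[OF h] mod3_facts(7)[OF N3[OF pos_info(1)[OF h]] pos_info(2)[OF h]] by auto
  next
    assume h: "adj_neg polys segs t"
    show ?thesis
      using neg_info[OF h] mod3_facts(6)[OF N3[OF neg_info(1)[OF h]] neg_info(2)[OF h]] by auto
  qed
  thus "t < length segs" "ent t < length (vv t)" "aa t \<in> open_side (vv t) (ent t)"
    "ext t < length (vv t)" "bb t \<in> open_side (vv t) (ext t)" by auto
qed

lemma b_bd:
  assumes "e < length segs"
  shows "(\<exists>w<length (vv e). bb e \<in> open_side (vv e) w) \<or> bb e \<in> set (vv e)"
proof (cases "Suc e < length segs")
  case True
  then show ?thesis using chain(1,2)[OF True] by blast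
next
  case False
  hence "e = length segs - 1" using assms by simp
  then show ?thesis using last_vertex by simp
qed

lemma a_bd:
  assumes "e < length segs"
  shows "(\<exists>w<length (vv e). aa e \<in> open_side (vv e) w) \<or> aa e \<in> set (vv e)"
proof (cases e)
  case 0
  then show ?thesis using first_vertex by simp
next
  case (Suc e')
  then show ?thesis using chain(4,5)[of e'] assms by blast
qed

lemma rho_b: "t < length segs \<Longrightarrow> cross dd (bb t) = G t" using G_b .

lemma end_lemma:
  assumes adj: "adjacent_seg polys segs t0" and e: "e < length segs"
    and ae: "aa e \<in> open_side (vv e) (ent e)" and pe: "pp e = pp t0" and ee: "ent e = ent t0"
    and na: "\<not> adjacent_seg polys segs e"
  shows "adj_pos polys segs t0 \<Longrightarrow> G e < G t0" and "\<not> adj_pos polys segs t0 \<Longrightarrow> G e > G t0"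
proof -
  note I = adj_info[OF adj]
  have t0: "t0 < length segs" using I(1) .
  let ?vs = "vv t0" and ?u = "ent t0" and ?x = "ext t0" and ?N = "length (vv t0)"
  have V: "vv e = ?vs" using pe by simp
  have cv: "convex_cw_polygon ?vs" using poly_ok(1)[OF t0] .
  have aeu: "aa e \<in> open_side ?vs ?u" using ae V ee by simp
  have xu: "?x \<noteq> ?u"
    using adj adjacent_cases pos_info neg_info mod3_facts(2,4) N3[OF t0]
    by (metis (no_types, lifting) mod3_facts(5) mod_less)
  have np: "\<not> ((cross dd (vtx ?vs ?x) - G e) * (cross dd (vtx ?vs (Suc ?x)) - G e) < 0)"
  proof
    assume h: "(cross dd (vtx ?vs ?x) - G e) * (cross dd (vtx ?vs (Suc ?x)) - G e) < 0"
    have pr: "cross (bb e - aa e) (vtx ?vs ?x - aa e) * cross (bb e - aa e) (vtx ?vs (Suc ?x) - aa e) < 0"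
      using prod_scale[OF e] h by blast
    have bd: "(\<exists>w<length ?vs. bb e \<in> open_side ?vs w) \<or> bb e \<in> set ?vs" using b_bd[OF e] V by simp
    have sg: "open_segment (aa e) (bb e) \<subseteq> poly_interior ?vs" using seg_ok(3)[OF e] V by simp
    have bx: "bb e \<in> open_side ?vs ?x"
      using exit_forced[OF cv seg_ok(2)[OF e] sg I(2) aeu I(4) xu bd pr] .
    show False
    proof (cases "adj_pos polys segs t0")
      case True
      hence "adj_pos polys segs e" using adj_pos_iff e I(2) aeu bx pos_info(4)[OF True] V by metis
      thus False using na adjacent_seg_def by blast
    next
      case False
      hence "adj_neg polys segs t0" using adj adjacent_seg_def by blast
      hence "adj_neg polys segs e" using adj_neg_iff e I(2) aeu bx neg_info(4) V by metis
      thus False using na adjacent_seg_def by blast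
    qed
  qed
  have en0: "cross dd (vtx ?vs ?u) < G t0 \<and> G t0 < cross dd (vtx ?vs (Suc ?u))"
    using os_between(1)[OF I(3) ent_sign[OF t0 I(2,3)]] by (simp add: G_def)
  have en1: "cross dd (vtx ?vs ?u) < G e \<and> G e < cross dd (vtx ?vs (Suc ?u))"
    using os_between(1)[OF aeu ent_sign[OF t0 I(2,3)]] by (simp add: G_def)
  have ex0: "cross dd (vtx ?vs (Suc ?x)) < G t0 \<and> G t0 < cross dd (vtx ?vs ?x)"
    using os_between(2)[OF I(5) ext_sign[OF t0 I(4,5)]] rho_b[OF t0] by simp
  show "adj_pos polys segs t0 \<Longrightarrow> G e < G t0"
  proof -
    assume p: "adj_pos polys segs t0"
    have "vtx ?vs ?x = vtx ?vs (Suc ?u)" using pos_info(4)[OF p] by (simp add: vtx_mod)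
    hence f1: "cross dd (vtx ?vs ?x) - G e > 0" using en1 by simp
    have "cross dd (vtx ?vs (Suc ?x)) - G e \<ge> 0"
    proof (rule ccontr)
      assume "\<not> ?thesis"
      hence "(cross dd (vtx ?vs ?x) - G e) * (cross dd (vtx ?vs (Suc ?x)) - G e) < 0"
        using f1 by (simp add: mult_pos_neg)
      thus False using np by blast
    qed
    thus "G e < G t0" using ex0 by linarith
  qed
  show "\<not> adj_pos polys segs t0 \<Longrightarrow> G e > G t0"
  proof -
    assume p: "\<not> adj_pos polys segs t0"
    hence n: "adj_neg polys segs t0" using adj adjacent_seg_def by blast
    have "Suc ?x mod ?N = ?u" using neg_info(4)[OF n] mod3_facts(5)[OF N3[OF t0] I(2)] by simp
    hence "vtx ?vs (Suc ?x) = vtx ?vs ?u" by (metis vtx_mod)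
    hence f1: "cross dd (vtx ?vs (Suc ?x)) - G e < 0" using en1 by simp
    have "cross dd (vtx ?vs ?x) - G e \<le> 0"
    proof (rule ccontr)
      assume "\<not> ?thesis"
      hence "(cross dd (vtx ?vs ?x) - G e) * (cross dd (vtx ?vs (Suc ?x)) - G e) < 0"
        using f1 by (simp add: mult_pos_neg)
      thus False using np by blast
    qed
    thus "G e > G t0" using ex0 by linarith
  qed
qed

lemma start_lemma:
  assumes adj: "adjacent_seg polys segs t0" and e: "e < length segs"
    and be: "bb e \<in> open_side (vv e) (ext e)" and pe: "pp e = pp t0" and ee: "ext e = ext t0"
    and na: "\<not> adjacent_seg polys segs e"
  shows "adj_pos polys segs t0 \<Longrightarrow> G e < G t0" and "\<not> adj_pos polys segs t0 \<Longrightarrow> G e > G t0"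
proof -
  note I = adj_info[OF adj]
  have t0: "t0 < length segs" using I(1) .
  let ?vs = "vv t0" and ?u = "ent t0" and ?x = "ext t0" and ?N = "length (vv t0)"
  have V: "vv e = ?vs" using pe by simp
  have cv: "convex_cw_polygon ?vs" using poly_ok(1)[OF t0] .
  have bex: "bb e \<in> open_side ?vs ?x" using be V ee by simp
  have xu: "?u \<noteq> ?x"
    using adj adjacent_cases pos_info neg_info mod3_facts(2,4) N3[OF t0]
    by (metis (no_types, lifting) mod3_facts(5) mod_less)
  have np: "\<not> ((cross dd (vtx ?vs ?u) - G e) * (cross dd (vtx ?vs (Suc ?u)) - G e) < 0)"
  proof
    assume h: "(cross dd (vtx ?vs ?u) - G e) * (cross dd (vtx ?vs (Suc ?u)) - G e) < 0"
    have pr: "cross (bb e - aa e) (vtx ?vs ?u - aa e) * cross (bb e - aa e) (vtx ?vs (Suc ?u) - aa e) < 0"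
      using prod_scale[OF e] h by blast
    have bd: "(\<exists>w<length ?vs. aa e \<in> open_side ?vs w) \<or> aa e \<in> set ?vs" using a_bd[OF e] V by simp
    have sg: "open_segment (aa e) (bb e) \<subseteq> poly_interior ?vs" using seg_ok(3)[OF e] V by simp
    have au: "aa e \<in> open_side ?vs ?u"
      using entry_forced[OF cv seg_ok(2)[OF e] sg I(4) bex I(2) xu bd pr] .
    show False
    proof (cases "adj_pos polys segs t0")
      case True
      hence "adj_pos polys segs e" using adj_pos_iff e I(2) au bex pos_info(4)[OF True] V by metis
      thus False using na adjacent_seg_def by blast
    next
      case False
      hence "adj_neg polys segs t0" using adj adjacent_seg_def by blast
      hence "adj_neg polys segs e" using adj_neg_iff e I(2) au bex neg_info(4) V by metis
      thus False using na adjacent_seg_def by blast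
    qed
  qed
  have en0: "cross dd (vtx ?vs ?u) < G t0 \<and> G t0 < cross dd (vtx ?vs (Suc ?u))"
    using os_between(1)[OF I(3) ent_sign[OF t0 I(2,3)]] by (simp add: G_def)
  have ex0: "cross dd (vtx ?vs (Suc ?x)) < G t0 \<and> G t0 < cross dd (vtx ?vs ?x)"
    using os_between(2)[OF I(5) ext_sign[OF t0 I(4,5)]] rho_b[OF t0] by simp
  have ex1: "cross dd (vtx ?vs (Suc ?x)) < G e \<and> G e < cross dd (vtx ?vs ?x)"
    using os_between(2)[OF bex ext_sign[OF t0 I(4,5)]] rho_b[OF e] by simp
  show "adj_pos polys segs t0 \<Longrightarrow> G e < G t0"
  proof -
    assume p: "adj_pos polys segs t0"
    have "vtx ?vs ?x = vtx ?vs (Suc ?u)" using pos_info(4)[OF p] by (simp add: vtx_mod)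
    hence f1: "cross dd (vtx ?vs (Suc ?u)) - G e > 0" using ex1 by simp
    have "cross dd (vtx ?vs ?u) - G e \<ge> 0"
    proof (rule ccontr)
      assume "\<not> ?thesis"
      hence "(cross dd (vtx ?vs ?u) - G e) * (cross dd (vtx ?vs (Suc ?u)) - G e) < 0"
        using f1 by (simp add: mult_neg_pos)
      thus False using np by blast
    qed
    thus "G e < G t0" using en0 by linarith
  qed
  show "\<not> adj_pos polys segs t0 \<Longrightarrow> G e > G t0"
  proof -
    assume p: "\<not> adj_pos polys segs t0"
    hence n: "adj_neg polys segs t0" using adj adjacent_seg_def by blast
    have "Suc ?x mod ?N = ?u" using neg_info(4)[OF n] mod3_facts(5)[OF N3[OF t0] I(2)] by simp
    hence "vtx ?vs (Suc ?x) = vtx ?vs ?u" by (metis vtx_mod)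
    hence f1: "cross dd (vtx ?vs ?u) - G e < 0" using ex1 by simp
    have "cross dd (vtx ?vs (Suc ?u)) - G e \<le> 0"
    proof (rule ccontr)
      assume "\<not> ?thesis"
      hence "(cross dd (vtx ?vs ?u) - G e) * (cross dd (vtx ?vs (Suc ?u)) - G e) < 0"
        using f1 by (simp add: mult_neg_pos)
      thus False using np by blast
    qed
    thus "G e > G t0" using en0 by linarith
  qed
qed

lemma main:
  assumes run: "maximal_adjacent_run polys segs i j"
    and m: "i \<le> m1" "m1 < m2" "m2 \<le> j"
    and pe: "pp m1 = pp m2"
    and sg: "(adj_pos polys segs m1 \<and> adj_pos polys segs m2) \<or> (adj_neg polys segs m1 \<and> adj_neg polys segs m2)"
  shows "even (j - i + 1)"
proof -
  let ?adj = "adjacent_seg polys segs" and ?pos = "adj_pos polys segs"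
  have R: "i \<le> j" "j < length segs" "\<forall>m\<in>{i..j}. ?adj m" "i = 0 \<or> \<not> ?adj (i-1)"
    "Suc j = length segs \<or> \<not> ?adj (Suc j)"
    using run unfolding maximal_adjacent_run_def by auto
  have adjR: "\<And>t. i \<le> t \<Longrightarrow> t \<le> j \<Longrightarrow> ?adj t" using R(3) by auto
  have i0: "i \<noteq> 0"
  proof
    assume "i = 0"
    hence a0: "?adj 0" using adjR R(1) by auto
    show False using C3[OF poly_ok(1)[OF adj_info(1)[OF a0]] adj_info(2,3)[OF a0] first_vertex] .
  qed
  hence ni: "\<not> ?adj (i - 1)" using R(4) by simp
  have sj: "Suc j < length segs"
  proof (rule ccontr)
    assume "\<not> ?thesis"
    hence jl: "j = length segs - 1" using R(2) by simp
    have aj: "?adj j" using adjR R(1) by auto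
    show False using C3[OF poly_ok(1)[OF adj_info(1)[OF aj]] adj_info(4,5)[OF aj]] last_vertex jl by simp
  qed
  hence nj: "\<not> ?adj (Suc j)" using R(5) by simp
  have altn: "\<And>n. i + n \<le> j \<Longrightarrow> (?pos (i+n) \<longleftrightarrow> (?pos i \<longleftrightarrow> even n))"
  proof -
    fix n show "i + n \<le> j \<Longrightarrow> (?pos (i+n) \<longleftrightarrow> (?pos i \<longleftrightarrow> even n))"
    proof (induction n)
      case 0 then show ?case by simp
    next
      case (Suc n)
      have st: "Suc (i + n) < length segs" using Suc.prems R(2) by simp
      have "?pos (Suc (i+n)) \<longleftrightarrow> \<not> ?pos (i+n)"
        using alt_step[OF st adjR adjR] Suc.prems by simp
      then show ?case using Suc by simp
    qed
  qed
  have alt: "\<And>t. i \<le> t \<Longrightarrow> t \<le> j \<Longrightarrow> (?pos t \<longleftrightarrow> (?pos i \<longleftrightarrow> even (t - i)))"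
    using altn by (metis le_add_diff_inverse)
  define k where "k = m2 - m1"
  have pm: "?pos m1 \<longleftrightarrow> ?pos m2" using sg pos_not_neg by blast
  have "even (m1 - i) \<longleftrightarrow> even (m2 - i)" using alt[of m1] alt[of m2] m pm by auto
  hence kev: "even k" unfolding k_def using m by presburger
  have k0: "k > 0" "k \<le> j - i" "m1 + k = m2" using m k_def by auto
  have m1l: "m1 < length segs" "m2 < length segs" using m R(2) by auto
  have sc: "ent m1 = ent m2 \<and> ext m1 = ext m2" using same_corner[OF m1l pe sg] .
  define Dl where "Dl = G m2 - G m1"
  have posk: "\<And>s. i \<le> s \<Longrightarrow> s + k \<le> j \<Longrightarrow> (?pos s \<longleftrightarrow> ?pos (s + k))"
  proof -
    fix s assume "i \<le> s" "s + k \<le> j"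
    moreover have "even (s + k - i) \<longleftrightarrow> even (s - i)" using kev \<open>i \<le> s\<close> by presburger
    ultimately show "?pos s \<longleftrightarrow> ?pos (s + k)" using alt[of s] alt[of "s+k"] by auto
  qed
  have fwd: "\<And>n. m1 + n + k \<le> j \<Longrightarrow> pp (m1+n) = pp (m1+n+k) \<and> ent (m1+n) = ent (m1+n+k) \<and>
      ext (m1+n) = ext (m1+n+k) \<and> G (m1+n+k) = G (m1+n) + Dl"
  proof -
    fix n show "m1 + n + k \<le> j \<Longrightarrow> pp (m1+n) = pp (m1+n+k) \<and> ent (m1+n) = ent (m1+n+k) \<and>
      ext (m1+n) = ext (m1+n+k) \<and> G (m1+n+k) = G (m1+n) + Dl"
    proof (induction n)
      case 0 then show ?case using sc pe k0(3) Dl_def by simp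
    next
      case (Suc n)
      define s where "s = m1 + n"
      have IH: "pp s = pp (s+k) \<and> ent s = ent (s+k) \<and> ext s = ext (s+k) \<and> G (s+k) = G s + Dl"
        using Suc s_def by simp
      have st1: "Suc s < length segs" using Suc.prems R(2) s_def by simp
      have st2: "Suc (s + k) < length segs" using Suc.prems R(2) s_def by simp
      have c1: "glue (pp s, ext s) = (pp (Suc s), ent (Suc s))" using chain(3)[OF st1] .
      have c2: "glue (pp (s+k), ext (s+k)) = (pp (Suc (s+k)), ent (Suc (s+k)))" using chain(3)[OF st2] .
      have P1: "pp (Suc s) = pp (Suc s + k)" "ent (Suc s) = ent (Suc s + k)"
        using c1 c2 IH by auto
      have a1: "?adj (Suc s)" "?adj (Suc s + k)" using adjR Suc.prems s_def m by auto
      have "?pos (Suc s) \<longleftrightarrow> ?pos (Suc s + k)" using posk[of "Suc s"] Suc.prems s_def m by simp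
      hence P2: "ext (Suc s) = ext (Suc s + k)" using corner_det[OF a1 P1(1)] P1(2) by simp
      have "G (Suc s + k) = G (Suc s) + Dl"
        using chain(6)[OF st1] chain(6)[OF st2] IH by simp
      then show ?case using P1 P2 s_def by simp
    qed
  qed
  have bwd: "\<And>n. n \<le> m1 - i \<Longrightarrow> pp (m1-n) = pp (m1-n+k) \<and> ent (m1-n) = ent (m1-n+k) \<and>
      ext (m1-n) = ext (m1-n+k) \<and> G (m1-n+k) = G (m1-n) + Dl"
  proof -
    fix n show "n \<le> m1 - i \<Longrightarrow> pp (m1-n) = pp (m1-n+k) \<and> ent (m1-n) = ent (m1-n+k) \<and>
      ext (m1-n) = ext (m1-n+k) \<and> G (m1-n+k) = G (m1-n) + Dl"
    proof (induction n)
      case 0 then show ?case using sc pe k0(3) Dl_def by simp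
    next
      case (Suc n)
      define r where "r = m1 - Suc n"
      have rs: "Suc r = m1 - n" using Suc.prems m r_def by simp
      have IH: "pp (Suc r) = pp (Suc r+k) \<and> ent (Suc r) = ent (Suc r+k) \<and> ext (Suc r) = ext (Suc r+k) \<and>
          G (Suc r+k) = G (Suc r) + Dl"
        using Suc rs by simp
      have ir: "i \<le> r" using Suc.prems m r_def by simp
      have rk: "Suc r + k \<le> j" using rs k0 m by simp
      have st1: "Suc r < length segs" using rk R(2) by simp
      have st2: "Suc (r + k) < length segs" using rk R(2) by simp
      have c1: "glue (pp (Suc r), ent (Suc r)) = (pp r, ext r)" using backl[OF st1] .
      have c2: "glue (pp (Suc (r+k)), ent (Suc (r+k))) = (pp (r+k), ext (r+k))" using backl[OF st2] .
      have P1: "pp r = pp (r + k)" "ext r = ext (r + k)" using c1 c2 IH by auto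
      have a1: "?adj r" "?adj (r + k)" using adjR ir rk by auto
      have "?pos r \<longleftrightarrow> ?pos (r + k)" using posk[of r] ir rk by simp
      hence P2: "ent r = ent (r + k)" using corner_det[OF a1 P1(1)] P1(2) by simp
      have "G (r + k) = G r + Dl"
        using chain(6)[OF st1] chain(6)[OF st2] IH P1 by simp
      then show ?case using P1 P2 r_def by simp
    qed
  qed
  have per: "\<And>s. i \<le> s \<Longrightarrow> s + k \<le> j \<Longrightarrow> pp s = pp (s+k) \<and> ent s = ent (s+k) \<and>
      ext s = ext (s+k) \<and> G (s+k) = G s + Dl"
  proof -
    fix s assume iss: "i \<le> s" and sk: "s + k \<le> j"
    show "pp s = pp (s+k) \<and> ent s = ent (s+k) \<and> ext s = ext (s+k) \<and> G (s+k) = G s + Dl"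
    proof (cases "m1 \<le> s")
      case True
      then show ?thesis using fwd[of "s - m1"] sk by simp
    next
      case False
      then show ?thesis using bwd[of "m1 - s"] iss by simp
    qed
  qed
  define t0 where "t0 = j + 1 - k"
  have t0r: "i < t0" "t0 \<le> j" "t0 - 1 + k = j" "Suc (t0 - 1) = t0" using k0 R(1) t0_def by auto
  have pj: "pp (t0-1) = pp j \<and> ext (t0-1) = ext j \<and> G j = G (t0-1) + Dl"
    using per[of "t0 - 1"] t0r by simp
  have st0: "Suc (t0 - 1) < length segs" using t0r R(2) by simp
  have ca: "glue (pp (t0-1), ext (t0-1)) = (pp t0, ent t0)" using chain(3)[OF st0] t0r(4) by simp
  have cb: "glue (pp j, ext j) = (pp (Suc j), ent (Suc j))" using chain(3)[OF sj] .
  have E1: "pp (Suc j) = pp t0" "ent (Suc j) = ent t0" using ca cb pj by auto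
  have E2: "G (Suc j) = G t0 + Dl"
    using chain(6)[OF st0] chain(6)[OF sj] pj t0r(4) by simp
  have at0: "?adj t0" using adjR t0r by simp
  have endr: "?pos t0 \<Longrightarrow> Dl < 0" "\<not> ?pos t0 \<Longrightarrow> Dl > 0"
    using end_lemma[OF at0 sj chain(5)[OF sj] E1 nj] E2 by auto
  define s0 where "s0 = i - 1 + k"
  have s0r: "i \<le> s0" "Suc s0 = i + k" "Suc (i - 1) = i" "i + k \<le> j" using k0 i0 s0_def by auto
  have pi: "pp i = pp (i+k) \<and> ent i = ent (i+k) \<and> G (i+k) = G i + Dl" using per[of i] s0r by simp
  have sti: "Suc (i - 1) < length segs" using s0r R by simp
  have sts: "Suc s0 < length segs" using s0r R by simp
  have ba: "glue (pp i, ent i) = (pp (i-1), ext (i-1))" using backl[OF sti] s0r(3) by simp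
  have bb': "glue (pp (i+k), ent (i+k)) = (pp s0, ext s0)" using backl[OF sts] s0r(2) by simp
  have F1: "pp (i-1) = pp s0" "ext (i-1) = ext s0" using ba bb' pi by auto
  have F2: "G s0 = G (i-1) + Dl"
    using chain(6)[OF sti] chain(6)[OF sts] pi s0r(2,3) F1 by simp
  have as0: "?adj s0" using adjR s0r by simp
  have il: "i - 1 < length segs" using sti by simp
  have startr: "?pos s0 \<Longrightarrow> Dl > 0" "\<not> ?pos s0 \<Longrightarrow> Dl < 0"
    using start_lemma[OF as0 il chain(2)[OF sti] F1 ni] F2 by auto
  have "?pos t0 \<longleftrightarrow> \<not> ?pos s0" using endr startr by force
  hence "even (t0 - i) \<longleftrightarrow> \<not> even (s0 - i)" using alt[of t0] alt[of s0] t0r s0r by auto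
  moreover have "s0 - i = k - 1" using s0_def i0 by simp
  ultimately show ?thesis using kev k0 t0_def R(1) by presburger
qed

end


theorem mainTheorem9:
  fixes polys :: "complex list list" and glue :: "nat \<times> nat \<Rightarrow> nat \<times> nat"
    and segs :: "(nat \<times> complex \<times> complex) list" and i j m1 m2 :: nat
  assumes "translation_surface_P1P2 polys glue"
    and "saddle_connection polys glue segs"
    and "\<not> is_side polys segs" and "\<not> is_diagonal polys segs"
    and "maximal_adjacent_run polys segs i j"
    and "m1 \<in> {i..j}" and "m2 \<in> {i..j}" and "m1 \<noteq> m2"
    and "fst (segs ! m1) = fst (segs ! m2)"
    and "(adj_pos polys segs m1 \<and> adj_pos polys segs m2) \<or>
         (adj_neg polys segs m1 \<and> adj_neg polys segs m2)"
  shows "even (j - i + 1)"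
proof -
  have TR: "transversal_saddle_connection polys glue segs"
    using assms(2,3) unfolding saddle_connection_def by blast
  interpret SC polys glue segs using assms(1) TR by unfold_locales
  show ?thesis
  proof (cases "m1 < m2")
    case True
    then show ?thesis using main[OF assms(5) _ True _ assms(9) assms(10)] assms(6,7) by auto
  next
    case False
    hence lt: "m2 < m1" using assms(8) by simp
    have sg: "(adj_pos polys segs m2 \<and> adj_pos polys segs m1) \<or> (adj_neg polys segs m2 \<and> adj_neg polys segs m1)"
      using assms(10) by blast
    show ?thesis using main[OF assms(5) _ lt _ assms(9)[symmetric] sg] assms(6,7) by auto
  qed
qed

end
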